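(* Let $(F_n)_{n\ge1}$ be the Fibonacci sequence ($F_1=F_2=1$, $F_{n+2}=F_{n+1}+F_n$). For a positive integer $n$ let $g(n):=\gcd(n,F_n)$, let $z(n)$ be the smallest positive integer $k$ such that $n\mid F_k$, and let $\ell(n):=\operatorname{lcm}(n,z(n))$. Let $\mathcal{A}:=\{g(n): n\ge1\}$. Then for all positive integers $m,n$ and all primes $p$: (i) if $m\mid n$ then $g(m)\mid g(n)$; (ii) $n\mid g(m)$ if and only if $\ell(n)\mid m$; (iii) $n\in\mathcal{A}$ if and only if $n=g(\ell(n))$; (iv) if $\ell(p)\mid \ell(n)$ and $n\in\mathcal{A}$, then $p\mid n$; (v) $\ell(p)=p\,z(p)$ if $p\ne 5$, and $\ell(5)=5$; (vi) if $p\neq 3$ and $\ell(q)\nmid z(p)$ for all primes $q$, then $p\in\mathcal{A}$. *)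

theory Defs
  imports "HOL-Number_Theory.Number_Theory"
begin

definition fg :: "nat \<Rightarrow> nat" where
  "fg n = gcd n (fib n)"

definition fz :: "nat \<Rightarrow> nat" where
  "fz n = (LEAST k. 0 < k \<and> n dvd fib k)"

definition fl :: "nat \<Rightarrow> nat" where
  "fl n = lcm n (fz n)"

definition fA :: "nat set" where
  "fA = {fg n | n. n \<ge> 1}"

end

theory Submission imports Defs begin

definition fP :: "nat \<Rightarrow> nat \<Rightarrow> nat \<times> nat" where
  "fP n k = (fib k mod n, fib (Suc k) mod n)"

lemma fP_back: assumes h: "fP n (Suc a) = fP n (Suc b)" shows "fP n a = fP n b"
proof -
  have h1: "[fib (Suc a) = fib (Suc b)] (mod n)" using h unfolding fP_def cong_def by simp
  have h2: "[fib (Suc (Suc a)) = fib (Suc (Suc b))] (mod n)" using h unfolding fP_def cong_def by simp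
  have ea: "fib (Suc (Suc a)) = fib a + fib (Suc a)" and eb: "fib (Suc (Suc b)) = fib b + fib (Suc b)"
    by simp_all
  have "[fib a + fib (Suc a) = fib b + fib (Suc b)] (mod n)"
    using h2 unfolding ea eb .
  moreover have "[fib a + fib (Suc a) = fib a + fib (Suc b)] (mod n)"
    using h1 by (rule cong_add_lcancel_nat[THEN iffD2])
  ultimately have "[fib a + fib (Suc b) = fib b + fib (Suc b)] (mod n)"
    by (meson cong_sym cong_trans)
  hence "[fib a = fib b] (mod n)" by (rule cong_add_rcancel_nat[THEN iffD1])

  thus ?thesis using h1 unfolding fP_def cong_def by simp
qed

lemma fP_back_gen: "fP n (a + t) = fP n (b + t) \<Longrightarrow> fP n a = fP n b"
proof (induction t)
  case 0 thus ?case by simp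
next
  case (Suc t)
  have "fP n (Suc (a + t)) = fP n (Suc (b + t))" using Suc.prems by simp
  hence "fP n (a + t) = fP n (b + t)" by (rule fP_back)
  thus ?case by (rule Suc.IH)
qed
lemma fib_exists: assumes "0 < (n::nat)" shows "\<exists>k. 0 < k \<and> n dvd fib k"
proof -
  have sub: "fP n ` {0..n*n} \<subseteq> {0..<n} \<times> {0..<n}"
    using assms by (auto simp: fP_def)
  have "card (fP n ` {0..n*n}) \<le> card ({0..<n} \<times> {0..<n})"
    by (rule card_mono[OF _ sub]) auto
  also have "\<dots> = n * n" by simp
  finally have "card (fP n ` {0..n*n}) < card {0..n*n}" by simp
  hence "\<not> inj_on (fP n) {0..n*n}" by (rule pigeonhole)
  then obtain i j where ij: "i \<noteq> j" "fP n i = fP n j"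
    unfolding inj_on_def by blast
  have "\<exists>i j. i < j \<and> fP n i = fP n j"
  proof (cases "i < j")
    case True thus ?thesis using ij by blast
  next
    case False thus ?thesis using ij by (metis linorder_neqE_nat)
  qed
  then obtain a b where ab: "a < b" "fP n a = fP n b" by blast
  have "fP n 0 = fP n (b - a)"
    using fP_back_gen[of n 0 a "b - a"] ab by simp
  hence "fib (b - a) mod n = 0" by (simp add: fP_def)
  thus ?thesis using ab(1) by (intro exI[of _ "b - a"]) auto
qed

lemma fz_basic: assumes "0 < n" shows "0 < fz n" "n dvd fib (fz n)"
proof -
  obtain k where "0 < k \<and> n dvd fib k" using fib_exists[OF assms] by blast
  hence "0 < fz n \<and> n dvd fib (fz n)" unfolding fz_def by (rule LeastI)
  thus "0 < fz n" "n dvd fib (fz n)" by auto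
qed

lemma fz_le: "0 < k \<Longrightarrow> n dvd fib k \<Longrightarrow> fz n \<le> k"
  unfolding fz_def by (rule Least_le) simp

lemma fib_dvd_mono: assumes "m dvd n" shows "fib m dvd fib n"
proof -
  have "gcd m n = m" using assms by (simp add: gcd_nat.absorb1)
  hence "fib m = gcd (fib m) (fib n)" by (metis fib_gcd)
  thus ?thesis by (metis gcd_dvd2)
qed

lemma fz_dvd_iff: assumes "0 < n" shows "n dvd fib k \<longleftrightarrow> fz n dvd k"
proof
  assume h: "n dvd fib k"
  have "n dvd fib (gcd k (fz n))" using h fz_basic[OF assms] by (simp add: fib_gcd)
  moreover have g: "0 < gcd k (fz n)" using fz_basic[OF assms] by simp
  ultimately have "fz n \<le> gcd k (fz n)" by (meson fz_le)
  moreover have "gcd k (fz n) \<le> fz n" using fz_basic[OF assms] by (simp add: gcd_le2_nat)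
  ultimately have "gcd k (fz n) = fz n" by simp
  thus "fz n dvd k" by (metis gcd_dvd1)
next
  assume "fz n dvd k"
  thus "n dvd fib k" using fib_dvd_mono fz_basic[OF assms] dvd_trans by blast
qed


definition co :: "nat \<Rightarrow> nat" where "co k = (if odd k then 5^(k div 2) else 0)"
definition ev :: "nat \<Rightarrow> nat" where "ev k = (if even k then 5^(k div 2) else 0)"
definition Bs :: "nat \<Rightarrow> nat" where "Bs n = (\<Sum>k\<le>n. (n choose k) * co k)"
definition As :: "nat \<Rightarrow> nat" where "As n = (\<Sum>k\<le>n. (n choose k) * ev k)"

lemma pascal_sum: "(\<Sum>k\<le>Suc n. (Suc n choose k) * c k) = (\<Sum>k\<le>n. (n choose k) * c k) + (\<Sum>k\<le>n. (n choose k) * c (Suc k))"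
proof -
  have a: "(\<Sum>k\<le>Suc n. (Suc n choose k) * c k) = c 0 + (\<Sum>k\<le>n. (Suc n choose Suc k) * c (Suc k))"
    unfolding sum.atMost_Suc_shift by (simp del: binomial_Suc_Suc)
  have b: "(\<Sum>k\<le>n. (Suc n choose Suc k) * c (Suc k)) = (\<Sum>k\<le>n. (n choose k) * c (Suc k)) + (\<Sum>k\<le>n. (n choose Suc k) * c (Suc k))"
    by (simp add: sum.distrib algebra_simps)
  have c: "c 0 + (\<Sum>k\<le>n. (n choose Suc k) * c (Suc k)) = (\<Sum>k\<le>Suc n. (n choose k) * c k)"
    unfolding sum.atMost_Suc_shift by simp
  have d: "(\<Sum>k\<le>Suc n. (n choose k) * c k) = (\<Sum>k\<le>n. (n choose k) * c k)"
    by (simp add: sum.atMost_Suc)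
  show ?thesis using a b c d by linarith
qed

lemma co_Suc: "co (Suc k) = ev k" by (auto simp: co_def ev_def)
lemma ev_Suc: "ev (Suc k) = 5 * co k" by (auto simp: co_def ev_def elim: oddE)

lemma Bs_Suc: "Bs (Suc n) = Bs n + As n"
  unfolding Bs_def As_def by (subst pascal_sum) (simp add: co_Suc)

lemma As_Suc: "As (Suc n) = As n + 5 * Bs n"
  unfolding Bs_def As_def by (subst pascal_sum) (simp add: ev_Suc sum_distrib_left mult.left_commute)

lemma Bs_SS: "Bs (Suc (Suc n)) = 2 * Bs (Suc n) + 4 * Bs n"
  using Bs_Suc[of "Suc n"] As_Suc[of n] Bs_Suc[of n] by simp

lemma Bs_fib_aux: "2 * Bs n = 2^n * fib n \<and> 2 * Bs (Suc n) = 2^(Suc n) * fib (Suc n)"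
proof (induction n)
  case 0 thus ?case by (simp add: Bs_def co_def)
next
  case (Suc n)
  have "2 * Bs (Suc (Suc n)) = 2 * (2 * Bs (Suc n)) + 4 * (2 * Bs n)" using Bs_SS by simp
  also have "\<dots> = 2^(Suc (Suc n)) * fib (Suc (Suc n))" using Suc.IH by (simp add: algebra_simps)
  finally show ?case using Suc.IH by simp
qed

lemma Bs_fib: "2 * Bs n = 2^n * fib n" using Bs_fib_aux by blast

lemma prime_sum_cong:
  fixes p :: nat assumes "prime p"
  shows "[(\<Sum>k\<le>p. (p choose k) * c k) = c 0 + c p] (mod p)"
proof -
  have p: "p > 1" using assms prime_gt_1_nat by blast
  have eq: "{..p} = insert 0 (insert p {1..<p})" using p by auto
  have dv: "p dvd (\<Sum>k\<in>{1..<p}. (p choose k) * c k)"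
    by (rule dvd_sum) (use assms p in \<open>auto intro!: dvd_mult2 dvd_choose_prime\<close>)
  have "(\<Sum>k\<le>p. (p choose k) * c k) = c 0 + c p + (\<Sum>k\<in>{1..<p}. (p choose k) * c k)"
    unfolding eq using p by (simp add: sum.insert)
  moreover have "[c 0 + c p + (\<Sum>k\<in>{1..<p}. (p choose k) * c k) = c 0 + c p + 0] (mod p)"
    using dv cong_add_lcancel_nat cong_0_iff by blast
  ultimately show ?thesis by simp
qed

lemma prime_fib_main:
  fixes p :: nat assumes pr: "prime p" and p2: "p \<noteq> 2" and p5: "p \<noteq> 5"
  shows "p dvd fib (p - 1) \<or> p dvd fib (p + 1)"
proof -
  have "p \<ge> 2" using prime_ge_2_nat[OF pr] .
  hence p1: "p > 2" using p2 by simp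
  have odd: "odd p" using pr p1 prime_odd_nat by blast
  define h where "h = p div 2"
  have ph: "p = Suc (2 * h)" using odd h_def by presburger
  have nd2: "\<not> p dvd 2" using p1 by (auto dest: dvd_imp_le)
  have cop2: "coprime 2 p" using prime_imp_coprime_nat[OF pr nd2] by (simp add: coprime_commute)
  have nd5: "\<not> p dvd 5"
  proof
    assume "p dvd 5"
    hence "p \<le> 5" by (rule dvd_imp_le) simp
    hence "p = 3 \<or> p = 4" using p1 p5 by linarith
    thus False using \<open>p dvd 5\<close> by auto
  qed
  have co0: "co 0 = 0" and cop: "co p = 5^h" and ev0: "ev 0 = 1" and evp: "ev p = 0"
    using odd by (auto simp: co_def ev_def h_def)
  have Bp: "[Bs p = 5^h] (mod p)" using prime_sum_cong[OF pr, of co] by (simp add: Bs_def co0 cop)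
  have Ap: "[As p = 1] (mod p)" using prime_sum_cong[OF pr, of ev] by (simp add: As_def ev0 evp)
  have BSp: "[Bs (Suc p) = 5^h + 1] (mod p)" unfolding Bs_Suc using Bp Ap by (rule cong_add)
  have f2: "[2^(p-1) = 1] (mod p)" using fermat_theorem[OF pr nd2] .
  have f2p: "[2^p = 2] (mod p)"
  proof -
    have "[2 * 2^(p-1) = 2 * 1] (mod p)" using f2 by (rule cong_scalar_left)
    moreover have "p = Suc (p - 1)" using p1 by simp
    hence "2 * 2^(p-1) = (2::nat)^p" by (metis power_Suc)
    ultimately show ?thesis by simp
  qed
  have f2p1: "[2^Suc p = 4] (mod p)" using cong_scalar_left[OF f2p, of 2] by simp
  have "[2 * fib p = 2 * 5^h] (mod p)"
  proof -
    have "[2^p * fib p = 2 * fib p] (mod p)" using cong_scalar_right[OF f2p] .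
    moreover have "[2^p * fib p = 2 * 5^h] (mod p)" unfolding Bs_fib[symmetric] using cong_scalar_left[OF Bp] .
    ultimately show ?thesis using cong_sym cong_trans by blast
  qed
  hence Fp: "[fib p = 5^h] (mod p)" using cong_mult_lcancel_nat[OF cop2] by blast
  have "[4 * fib (Suc p) = 2 * (5^h + 1)] (mod p)"
  proof -
    have "[2^Suc p * fib (Suc p) = 4 * fib (Suc p)] (mod p)" using cong_scalar_right[OF f2p1] .
    moreover have "[2^Suc p * fib (Suc p) = 2 * (5^h+1)] (mod p)" unfolding Bs_fib[symmetric] using cong_scalar_left[OF BSp] .
    ultimately show ?thesis using cong_sym cong_trans by blast
  qed
  hence "[2 * (2 * fib (Suc p)) = 2 * (5^h + 1)] (mod p)" by (simp add: mult.assoc[symmetric])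
  hence FSp: "[2 * fib (Suc p) = 5^h + 1] (mod p)" using cong_mult_lcancel_nat[OF cop2] by blast
  have "[5^(p-1) = 1] (mod p)" using fermat_theorem[OF pr nd5] .
  moreover have "p - 1 = h + h" using ph by simp
  hence "(5::nat)^(p-1) = 5^h * 5^h" by (simp add: power_add)
  ultimately have sq: "[5^h * 5^h = 1] (mod p)" by simp
  define x where "x = int (5^h)"
  have "[int (5^h * 5^h) = int 1] (mod int p)" using sq by (simp only: cong_int_iff)
  hence "[x * x = 1] (mod int p)" unfolding x_def by simp
  hence "int p dvd x * x - 1" by (simp add: cong_iff_dvd_diff)
  moreover have "x * x - 1 = (x - 1) * (x + 1)" by (simp add: algebra_simps)
  ultimately have "int p dvd (x - 1) * (x + 1)" by simp
  moreover have "prime (int p)" using pr by simp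
  ultimately have "int p dvd x - 1 \<or> int p dvd x + 1" using prime_dvd_mult_iff by blast
  thus ?thesis
  proof
    assume "int p dvd x + 1"
    hence "int p dvd int (5^h + 1)" unfolding x_def by (simp add: add.commute)
    hence "p dvd 5^h + 1" by (simp only: int_dvd_int_iff)
    hence "p dvd 2 * fib (Suc p)" using cong_dvd_iff[OF FSp] by simp
    hence "p dvd fib (Suc p)" using prime_dvd_mult_nat[OF pr] nd2 by blast
    thus ?thesis by simp
  next
    assume "int p dvd x - 1"
    hence "[x = 1] (mod int p)" by (simp add: cong_iff_dvd_diff)
    hence "[int (5^h) = int 1] (mod int p)" unfolding x_def by simp
    hence c1: "[5^h = 1] (mod p)" by (simp only: cong_int_iff)
    have "[5^h + 1 = 1 + 1] (mod p)" using c1 cong_refl by (rule cong_add)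
    hence "[2 * fib (Suc p) = 1 + 1] (mod p)" using FSp cong_trans by blast
    hence "[2 * fib (Suc p) = 2 * 1] (mod p)" by (simp only: one_add_one mult_1_right)
    hence a: "[fib (Suc p) = 1] (mod p)" using cong_mult_lcancel_nat[OF cop2] by blast
    have b: "[fib p = 1] (mod p)" using Fp c1 cong_trans by blast
    have "fib (Suc p) = fib p + fib (p - 1)" using ph by simp
    hence a2: "[fib p + fib (p - 1) = 1] (mod p)" using a by simp
    have "[1 = fib p + 0] (mod p)" using b cong_sym by simp
    hence "[fib p + fib (p - 1) = fib p + 0] (mod p)" using a2 cong_trans by blast
    hence "[fib (p - 1) = 0] (mod p)" by (simp only: cong_add_lcancel_nat)
    thus ?thesis by (simp add: cong_0_iff)
  qed
qed


lemma part1: "m dvd n \<Longrightarrow> fg m dvd fg n"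
  unfolding fg_def
  by (meson dvd_trans fib_dvd_mono gcd_dvd1 gcd_dvd2 gcd_greatest)

lemma part2: "0 < n \<Longrightarrow> n dvd fg m \<longleftrightarrow> fl n dvd m"
  unfolding fg_def fl_def using fz_dvd_iff by auto

lemma fl_pos: "0 < n \<Longrightarrow> 0 < fl n"
  unfolding fl_def using fz_basic(1) by (simp add: lcm_pos_nat)

lemma part3: assumes "0 < n" shows "n \<in> fA \<longleftrightarrow> n = fg (fl n)"
proof
  assume "n \<in> fA"
  then obtain m where m: "n = fg m" "m \<ge> 1" unfolding fA_def by blast
  have "n dvd fg m" using m by simp
  hence "fl n dvd m" using part2[OF assms] by blast
  hence a: "fg (fl n) dvd n" using part1 m by simp
  have b: "n dvd fg (fl n)" using part2[OF assms] by simp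
  show "n = fg (fl n)" using a b by (simp add: dvd_antisym)
next
  assume "n = fg (fl n)"
  thus "n \<in> fA" unfolding fA_def using fl_pos[OF assms] by (intro CollectI exI[of _ "fl n"]) auto
qed

lemma part4: assumes "0 < n" "prime p" "fl p dvd fl n" "n \<in> fA" shows "p dvd n"
proof -
  have p: "0 < p" using assms(2) prime_gt_0_nat by blast
  have "p dvd fg (fl p)" using part2[OF p] by simp
  also have "fg (fl p) dvd fg (fl n)" using part1 assms(3) .
  also have "fg (fl n) = n" using part3[OF assms(1)] assms(4) by simp
  finally show ?thesis .
qed

lemma fib3: "fib 3 = 2" by (simp add: numeral_eq_Suc)
lemma fib4: "fib 4 = 3" by (simp add: numeral_eq_Suc)
lemma fib5: "fib 5 = 5" by (simp add: numeral_eq_Suc)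
lemma fib6: "fib 6 = 8" by (simp add: numeral_eq_Suc)

lemma prime_fib2: assumes "prime p" "p \<noteq> 5" shows "p dvd fib (p - 1) \<or> p dvd fib (p + 1)"
proof (cases "p = 2")
  case True thus ?thesis using fib3 by simp
next
  case False thus ?thesis using prime_fib_main assms by blast
qed

lemma fz5: "fz 5 = 5"
  unfolding fz_def
proof (rule Least_equality)
  show "0 < (5::nat) \<and> 5 dvd fib 5" using fib5 by simp
next
  fix y :: nat assume y: "0 < y \<and> 5 dvd fib y"
  show "5 \<le> y"
  proof (rule ccontr)
    assume "\<not> 5 \<le> y"
    hence "y = 1 \<or> y = 2 \<or> y = 3 \<or> y = 4" using y by auto
    thus False using y fib3 fib4 by auto
  qed
qed

lemma fz_le_prime: assumes "prime q" shows "fz q \<le> q + 1"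
proof (cases "q = 5")
  case True thus ?thesis using fz5 by simp
next
  case False
  have q2: "q \<ge> 2" using assms prime_ge_2_nat by blast
  from prime_fib2[OF assms False] show ?thesis
  proof
    assume "q dvd fib (q - 1)"
    hence "fz q \<le> q - 1" using fz_le q2 by simp
    thus ?thesis by simp
  next
    assume "q dvd fib (q + 1)"
    thus ?thesis using fz_le by simp
  qed
qed

lemma not_dvd_fz: assumes "prime p" "p \<noteq> 5" shows "\<not> p dvd fz p"
proof
  assume h: "p dvd fz p"
  have p2: "p \<ge> 2" using assms prime_ge_2_nat by blast
  have p0: "0 < p" using p2 by simp
  from prime_fib2[OF assms] show False
  proof
    assume "p dvd fib (p - 1)"
    hence "fz p dvd p - 1" using fz_dvd_iff[OF p0] by simp
    hence "p dvd p - 1" using h dvd_trans by blast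
    moreover have "0 < p - 1" using p2 by simp
    ultimately have "p \<le> p - 1" by (rule dvd_imp_le)
    thus False using p2 by simp
  next
    assume "p dvd fib (p + 1)"
    hence "fz p dvd p + 1" using fz_dvd_iff[OF p0] by simp
    hence "p dvd p + 1" using h dvd_trans by blast
    hence "p dvd 1" by (metis dvd_add_right_iff dvd_refl)
    thus False using p2 by simp
  qed
qed

lemma part5: assumes "prime p" "p \<noteq> 5" shows "fl p = p * fz p"
proof -
  have "coprime p (fz p)" using not_dvd_fz[OF assms] assms(1) by (simp add: prime_imp_coprime_nat)
  thus ?thesis unfolding fl_def by (simp add: lcm_coprime)
qed

lemma part5b: "fl 5 = 5" unfolding fl_def fz5 by simp


lemma not4: "\<not> prime (4::nat)"
proof
  assume "prime (4::nat)"
  moreover have "(2::nat) dvd 4" by simp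
  ultimately have "(2::nat) = 1 \<or> (2::nat) = 4" using prime_nat_iff by blast
  thus False by simp
qed

lemma cases5: "prime (p::nat) \<Longrightarrow> p \<noteq> 3 \<Longrightarrow> p = 2 \<or> p = 5 \<or> p > 5"
proof -
  assume a: "prime p" "p \<noteq> 3"
  hence "p \<ge> 2" using prime_ge_2_nat by blast
  moreover have "p \<noteq> 4" using a not4 by blast
  ultimately show ?thesis using a by linarith
qed

lemma part6: assumes pr: "prime p" and p3: "p \<noteq> 3" and H: "\<forall>q::nat. prime q \<longrightarrow> \<not> fl q dvd fz p"
  shows "p \<in> fA"
proof -
  consider "p = 2" | "p = 5" | "p > 5" using cases5[OF pr p3] by blast
  thus ?thesis
  proof cases
    case 1
    have g1: "gcd (6::nat) 8 dvd 8 - 6" by (intro dvd_diff_nat) simp_all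
    have g2: "(2::nat) dvd gcd 6 8" by (intro gcd_greatest) simp_all
    have g3: "gcd (6::nat) 8 dvd 2" using g1 by simp
    have "gcd (6::nat) 8 = 2" using dvd_antisym[OF g3 g2] .
    hence "fg 6 = 2" unfolding fg_def fib6 .
    thus ?thesis unfolding fA_def 1 by (intro CollectI exI[of _ 6]) auto
  next
    case 2
    have "fg 5 = 5" unfolding fg_def fib5 by simp
    thus ?thesis unfolding fA_def 2 by (intro CollectI exI[of _ 5]) auto
  next
    case 3
    have p0: "0 < p" using 3 by simp
    have oddp: "odd p" using prime_odd_nat[OF pr] 3 by simp
    define z where "z = fz p"
    have z0: "0 < z" unfolding z_def using fz_basic[OF p0] by simp
    have nz: "\<not> p dvd z" unfolding z_def using not_dvd_fz[OF pr] 3 by simp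
    have zle: "z \<le> p + 1"
    proof -
      from prime_fib2[OF pr] 3 have "p dvd fib (p - 1) \<or> p dvd fib (p + 1)" by simp
      thus ?thesis
      proof
        assume "p dvd fib (p - 1)"
        hence "fz p \<le> p - 1" using 3 by (intro fz_le) simp_all
        thus ?thesis unfolding z_def by simp
      next
        assume "p dvd fib (p + 1)"
        hence "fz p \<le> p + 1" by (intro fz_le) simp_all
        thus ?thesis unfolding z_def by simp
      qed
    qed
    have l: "fl p = p * z" unfolding z_def using part5[OF pr] 3 by simp
    define d where "d = fg (p * z)"
    have pd: "p dvd d" unfolding d_def l[symmetric] using part2[OF p0] by simp
    have d0: "0 < d" unfolding d_def fg_def using p0 z0 by simp
    obtain e where e: "d = p * e" using pd by blast
    have "e = 1"
    proof (rule ccontr)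
      assume "e \<noteq> 1"
      then obtain q where q: "prime q" "q dvd e" using prime_factor_nat by blast
      have pqd: "p * q dvd d" using q e by simp
      have ddv1: "d dvd p * z" unfolding d_def fg_def by simp
      have ddv2: "d dvd fib (p * z)" unfolding d_def fg_def by simp
      show False
      proof (cases "q = p")
        case True
        hence "p * p dvd d" using pqd by simp
        hence "p * p dvd p * z" using ddv1 by (rule dvd_trans)
        hence "p dvd z" using p0 by simp
        thus False using nz by simp
      next
        case False
        have q0: "0 < q" using q prime_gt_0_nat by blast
        have qd: "q dvd d" using dvd_trans[OF dvd_triv_right pqd] .
        have "q dvd p * z" using dvd_trans[OF qd ddv1] .
        moreover have "\<not> q dvd p" using primes_dvd_imp_eq[OF q(1) pr] False by blast
        ultimately have qz: "q dvd z" using prime_dvd_mult_nat[OF q(1)] by blast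
        have "q dvd fib (p * z)" using dvd_trans[OF qd ddv2] .
        hence fzq: "fz q dvd p * z" using fz_dvd_iff[OF q0] by simp
        show False
        proof (cases "p dvd fz q")
          case True
          have "0 < fz q" using fz_basic[OF q0] by simp
          hence "p \<le> fz q" using dvd_imp_le[OF True] by blast
          moreover have "fz q \<le> q + 1" using fz_le_prime q by simp
          moreover have "q \<le> z" using dvd_imp_le[OF qz z0] .
          ultimately have "q = p - 1 \<or> q = p + 1" using zle False by linarith
          hence "even q" using oddp 3 by presburger
          moreover have "q > 2" using \<open>q = p - 1 \<or> q = p + 1\<close> 3 by linarith
          ultimately show False using prime_odd_nat[OF q(1)] by blast
        next
          case False
          hence "coprime p (fz q)" using pr by (simp add: prime_imp_coprime_nat)
          hence "fz q dvd z" using fzq coprime_dvd_mult_right_iff[of "fz q" p z] by (simp add: coprime_commute)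
          hence "fl q dvd z" unfolding fl_def using qz by simp
          thus False using H q(1) unfolding z_def by blast
        qed
      qed
    qed
    hence "fg (fl p) = p" using e l d_def by simp
    thus ?thesis unfolding fA_def using fl_pos[OF p0] by (intro CollectI exI[of _ "fl p"]) auto
  qed
qed

theorem lemma2p2:
  fixes m n p :: nat
  assumes "0 < m" and "0 < n" and "prime p"
  shows "(m dvd n \<longrightarrow> fg m dvd fg n)
       \<and> (n dvd fg m \<longleftrightarrow> fl n dvd m)
       \<and> (n \<in> fA \<longleftrightarrow> n = fg (fl n))
       \<and> (fl p dvd fl n \<and> n \<in> fA \<longrightarrow> p dvd n)
       \<and> (p \<noteq> 5 \<longrightarrow> fl p = p * fz p)
       \<and> fl 5 = 5
       \<and> (p \<noteq> 3 \<and> (\<forall>q::nat. prime q \<longrightarrow> \<not> fl q dvd fz p) \<longrightarrow> p \<in> fA)"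
proof (intro conjI impI)
  show "m dvd n \<Longrightarrow> fg m dvd fg n" by (rule part1)
  show "n dvd fg m \<longleftrightarrow> fl n dvd m" by (rule part2[OF assms(2)])
  show "n \<in> fA \<longleftrightarrow> n = fg (fl n)" by (rule part3[OF assms(2)])
  show "fl p dvd fl n \<and> n \<in> fA \<Longrightarrow> p dvd n" using part4[OF assms(2,3)] by blast
  show "p \<noteq> 5 \<Longrightarrow> fl p = p * fz p" by (rule part5[OF assms(3)])
  show "fl 5 = 5" by (rule part5b)
  show "p \<noteq> 3 \<and> (\<forall>q::nat. prime q \<longrightarrow> \<not> fl q dvd fz p) \<Longrightarrow> p \<in> fA"
    using part6[OF assms(3)] by blast
qed

end
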